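(* Suppose the smallest directed sub-block of $D$ has $n$ nodes. Then for every $x\in\mathbb{N}$ with $x<n-2$, every state in $M_{C(x)}$ is on at most two nodes, $M_{C(x)}=M_{C(0)}$, and the order-$x$ cycle-partitioning closed model coincides with the pair-level ($x=0$) model.
   Context: $D=(V,A)$ is a directed graph on $V=\{1,\dots,N\}$ with rates $T_{ij}\ge0$, $T_{ij}>0$ iff $(j,i)\in A$, $T_{ii}=0$. A subsystem state is $\psi^A_W$ with $W\subseteq V$ nonempty, $A:W\to\{S,I,R\}$; $S_i,I_i$ are single-node states; for $n\notin W$, $\psi^A_WI_n$ is the state on $W\cup\{n\}$ extending $A$ with $n$ in state $I$; $h^X_k(\psi^A_W)$ changes the state of $k\in W$ to $X$. $\mathrm{IN}_a(X)$ is the set of nodes that can reach some member of $X$ by traversing at most $a$ arcs. $f_{C(x)}(X,Y,i)=1$ iff $\mathrm{IN}_a(X)\cap\mathrm{IN}_b(Y)=\emptyset$ in $D-i$ for all $a,b\in\mathbb{N}$ with $a+b=x$, else $0$, and by convention $0$ when the second argument is empty. A state $\psi^A_W$ with $A:W\to\{S,I\}$ induces: $\psi^A_W$; $h^S_k(\psi^A_W)$ for $k\in W$ with $A_k=I$ and $T_{kn}>0$ for some $n\in W$ with $A_n=I$; and for each $k\in W$, $n\in V\setminus W$ with $T_{kn}>0$: the state $h^S_k(\psi^A_W)I_n$ if $f_{C(x)}(\{n\},W\setminus\{k\},\{k\})=0$, or the states $h^S_k(\psi^A_W)$, $S_kI_n$, $S_k$ if it equals $1$. $M_{C(x)}$ is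 the smallest set containing all $S_i,I_i$ and closed under induced states. The closed model of order $x$ is the ODE system, one equation per state in $M_{C(x)}$, obtained from the exact Markovian SIR moment equation for $\langle\psi^A_W\rangle$ by replacing $\langle h^S_k(\psi^A_W)I_n\rangle$ with $\langle h^S_k(\psi^A_W)\rangle\langle S_kI_n\rangle/\langle S_k\rangle$ whenever $f_{C(x)}(\{n\},W\setminus\{k\},\{k\})=1$. $D[W]$ is the induced subgraph. A graph is biconnected if it has at least three vertices, is connected and remains connected after deleting any vertex. $D[W]$ is a directed sub-block if some node of $W$ is reachable within $D[W]$ from all others and its underlying undirected graph is biconnected. *)

theory Defs
  imports Complex_Main
begin

text \<open>Network: vertex set V = {1..N}; rates T i j (rate at which node j infects node i);
  arc (j,i) is present iff T i j > 0.  Subsystem states are partial maps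
  psi :: nat \<rightharpoonup> status with W = dom psi.\<close>

datatype status = Sus | Inf | Rec

type_synonym sstate = "nat \<rightharpoonup> status"

definition verts :: "nat \<Rightarrow> nat set" where
  "verts N = {1..N}"

definition arcs_minus :: "nat \<Rightarrow> (nat \<Rightarrow> nat \<Rightarrow> real) \<Rightarrow> nat set \<Rightarrow> (nat \<times> nat) set" where
  "arcs_minus N T K = {(u,v). u \<in> verts N - K \<and> v \<in> verts N - K \<and> T v u > 0}"

definition IN_set :: "nat \<Rightarrow> (nat \<Rightarrow> nat \<Rightarrow> real) \<Rightarrow> nat set \<Rightarrow> nat \<Rightarrow> nat set \<Rightarrow> nat set" where
  "IN_set N T K a X = {v \<in> verts N - K. \<exists>x\<in>X. \<exists>m\<le>a. (v, x) \<in> (arcs_minus N T K) ^^ m}"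

definition fC :: "nat \<Rightarrow> (nat \<Rightarrow> nat \<Rightarrow> real) \<Rightarrow> nat \<Rightarrow> nat set \<Rightarrow> nat set \<Rightarrow> nat set \<Rightarrow> nat" where
  "fC N T x X Y K =
     (if Y = {} then 0
      else if (\<forall>a b. a + b = x \<longrightarrow> IN_set N T K a X \<inter> IN_set N T K b Y = {}) then 1 else 0)"

definition SI_state :: "sstate \<Rightarrow> bool" where
  "SI_state \<psi> \<longleftrightarrow> ran \<psi> \<subseteq> {Sus, Inf}"

inductive_set Mset :: "nat \<Rightarrow> (nat \<Rightarrow> nat \<Rightarrow> real) \<Rightarrow> nat \<Rightarrow> sstate set"
  for N :: nat and T :: "nat \<Rightarrow> nat \<Rightarrow> real" and x :: nat where
  single_S: "i \<in> verts N \<Longrightarrow> [i \<mapsto> Sus] \<in> Mset N T x"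
| single_I: "i \<in> verts N \<Longrightarrow> [i \<mapsto> Inf] \<in> Mset N T x"
| ind_inner: "\<lbrakk>\<psi> \<in> Mset N T x; SI_state \<psi>; \<psi> k = Some Inf; n \<in> dom \<psi>; \<psi> n = Some Inf; T k n > 0\<rbrakk>
      \<Longrightarrow> \<psi>(k \<mapsto> Sus) \<in> Mset N T x"
| ind_open: "\<lbrakk>\<psi> \<in> Mset N T x; SI_state \<psi>; k \<in> dom \<psi>; n \<in> verts N - dom \<psi>; T k n > 0;
      fC N T x {n} (dom \<psi> - {k}) {k} = 0\<rbrakk>
      \<Longrightarrow> \<psi>(k \<mapsto> Sus, n \<mapsto> Inf) \<in> Mset N T x"
| ind_closed1: "\<lbrakk>\<psi> \<in> Mset N T x; SI_state \<psi>; k \<in> dom \<psi>; n \<in> verts N - dom \<psi>; T k n > 0;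
      fC N T x {n} (dom \<psi> - {k}) {k} = 1\<rbrakk>
      \<Longrightarrow> \<psi>(k \<mapsto> Sus) \<in> Mset N T x"
| ind_closed2: "\<lbrakk>\<psi> \<in> Mset N T x; SI_state \<psi>; k \<in> dom \<psi>; n \<in> verts N - dom \<psi>; T k n > 0;
      fC N T x {n} (dom \<psi> - {k}) {k} = 1\<rbrakk>
      \<Longrightarrow> [k \<mapsto> Sus, n \<mapsto> Inf] \<in> Mset N T x"
| ind_closed3: "\<lbrakk>\<psi> \<in> Mset N T x; SI_state \<psi>; k \<in> dom \<psi>; n \<in> verts N - dom \<psi>; T k n > 0;
      fC N T x {n} (dom \<psi> - {k}) {k} = 1\<rbrakk>
      \<Longrightarrow> [k \<mapsto> Sus] \<in> Mset N T x"

text \<open>The (possibly closed) term standing for <h^S_k(psi) I_n> in the order-x closed model;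
  y assigns to each state the value of its variable <.>.\<close>
definition closed_term :: "nat \<Rightarrow> (nat \<Rightarrow> nat \<Rightarrow> real) \<Rightarrow> nat \<Rightarrow> sstate \<Rightarrow> (sstate \<Rightarrow> real)
    \<Rightarrow> nat \<Rightarrow> nat \<Rightarrow> real" where
  "closed_term N T x \<psi> y k n =
     (if fC N T x {n} (dom \<psi> - {k}) {k} = 1
      then y (\<psi>(k \<mapsto> Sus)) * y [k \<mapsto> Sus, n \<mapsto> Inf] / y [k \<mapsto> Sus]
      else y (\<psi>(k \<mapsto> Sus, n \<mapsto> Inf)))"

text \<open>Right-hand side of the exact Markovian SIR moment equation for <psi> (infection rates T,
  recovery rates gamma), with the order-x closure applied to the terms <h^S_k(psi) I_n>
  (for A_k = S one has h^S_k(psi) = psi, so that term is <psi I_n>).\<close>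
definition closed_rhs :: "nat \<Rightarrow> (nat \<Rightarrow> nat \<Rightarrow> real) \<Rightarrow> (nat \<Rightarrow> real) \<Rightarrow> nat \<Rightarrow> sstate
    \<Rightarrow> (sstate \<Rightarrow> real) \<Rightarrow> real" where
  "closed_rhs N T \<gamma> x \<psi> y =
     (\<Sum>k\<in>dom \<psi>.
        (case \<psi> k of
          Some Sus \<Rightarrow>
             - (\<Sum>n\<in>{n \<in> dom \<psi>. \<psi> n = Some Inf}. T k n) * y \<psi>
             - (\<Sum>n\<in>verts N - dom \<psi>. T k n * closed_term N T x \<psi> y k n)
        | Some Inf \<Rightarrow>
               (\<Sum>n\<in>{n \<in> dom \<psi>. \<psi> n = Some Inf}. T k n) * y (\<psi>(k \<mapsto> Sus))
             + (\<Sum>n\<in>verts N - dom \<psi>. T k n * closed_term N T x \<psi> y k n)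
             - \<gamma> k * y \<psi>
        | Some Rec \<Rightarrow> \<gamma> k * y (\<psi>(k \<mapsto> Inf))
        | None \<Rightarrow> 0))"

definition closed_model :: "nat \<Rightarrow> (nat \<Rightarrow> nat \<Rightarrow> real) \<Rightarrow> (nat \<Rightarrow> real) \<Rightarrow> nat
    \<Rightarrow> sstate \<Rightarrow> ((sstate \<Rightarrow> real) \<Rightarrow> real) option" where
  "closed_model N T \<gamma> x =
     (\<lambda>\<psi>. if \<psi> \<in> Mset N T x then Some (closed_rhs N T \<gamma> x \<psi>) else None)"

definition uedges :: "(nat \<Rightarrow> nat \<Rightarrow> real) \<Rightarrow> nat set \<Rightarrow> (nat \<times> nat) set" where
  "uedges T W = {(u,v). u \<in> W \<and> v \<in> W \<and> u \<noteq> v \<and> (T u v > 0 \<or> T v u > 0)}"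

definition uconnected :: "(nat \<Rightarrow> nat \<Rightarrow> real) \<Rightarrow> nat set \<Rightarrow> bool" where
  "uconnected T W \<longleftrightarrow> (\<forall>u\<in>W. \<forall>v\<in>W. (u, v) \<in> (uedges T W)\<^sup>*)"

definition ubiconnected :: "(nat \<Rightarrow> nat \<Rightarrow> real) \<Rightarrow> nat set \<Rightarrow> bool" where
  "ubiconnected T W \<longleftrightarrow> card W \<ge> 3 \<and> uconnected T W \<and> (\<forall>w\<in>W. uconnected T (W - {w}))"

definition darcs :: "(nat \<Rightarrow> nat \<Rightarrow> real) \<Rightarrow> nat set \<Rightarrow> (nat \<times> nat) set" where
  "darcs T W = {(u,v). u \<in> W \<and> v \<in> W \<and> T v u > 0}"

definition directed_subblock :: "nat \<Rightarrow> (nat \<Rightarrow> nat \<Rightarrow> real) \<Rightarrow> nat set \<Rightarrow> bool" where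
  "directed_subblock N T W \<longleftrightarrow> W \<subseteq> verts N \<and>
     (\<exists>r\<in>W. \<forall>u\<in>W. (u, r) \<in> (darcs T W)\<^sup>*) \<and> ubiconnected T W"

end

theory Submission
  imports Defs
begin

definition adjR :: "(nat \<Rightarrow> nat \<Rightarrow> real) \<Rightarrow> nat \<Rightarrow> nat \<Rightarrow> bool" where
  "adjR T u v \<longleftrightarrow> T u v > 0 \<or> T v u > 0"

lemma uedges_sym: "(a,b) \<in> uedges T S \<Longrightarrow> (b,a) \<in> uedges T S"
  unfolding uedges_def by auto

lemma path_uconn:
  assumes "successively (adjR T) p" "distinct p" "set p \<subseteq> S" "u \<in> set p" "v \<in> set p"
  shows "(u,v) \<in> (uedges T S)\<^sup>*"
  using assms
proof (induction p arbitrary: u v)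
  case Nil then show ?case by simp
next
  case (Cons x p)
  show ?case
  proof (cases p)
    case Nil then show ?thesis using Cons by simp
  next
    case (Cons y q)
    have e: "(x,y) \<in> uedges T S" using Cons.prems \<open>p = y#q\<close>
      unfolding uedges_def adjR_def by auto
    then have e': "(y,x) \<in> uedges T S" by (rule uedges_sym)
    have IH: "\<And>u v. u \<in> set p \<Longrightarrow> v \<in> set p \<Longrightarrow> (u,v) \<in> (uedges T S)\<^sup>*"
      using Cons.IH Cons.prems \<open>p = y#q\<close> by auto
    have y: "y \<in> set p" using \<open>p = y#q\<close> by simp
    show ?thesis
    proof (cases "u = x")
      case True
      show ?thesis
      proof (cases "v = x")
        case True then show ?thesis using \<open>u = x\<close> by simp
      next
        case False
        then have "v \<in> set p" using Cons.prems by simp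
        then show ?thesis using \<open>u = x\<close> e IH[OF y] by (meson converse_rtrancl_into_rtrancl)
      qed
    next
      case False
      then have u: "u \<in> set p" using Cons.prems by simp
      show ?thesis
      proof (cases "v = x")
        case True then show ?thesis using IH[OF u y] e' by (meson rtrancl_into_rtrancl)
      next
        case False
        then have "v \<in> set p" using Cons.prems by simp
        then show ?thesis using IH u by blast
      qed
    qed
  qed
qed

lemma path_uconnected:
  assumes "successively (adjR T) p" "distinct p"
  shows "uconnected T (set p)"
  unfolding uconnected_def using path_uconn[OF assms] by blast

lemma cycle_ubi:
  assumes d: "distinct cyc" and l: "3 \<le> length cyc" and s: "successively (adjR T) cyc"
    and w: "adjR T (last cyc) (hd cyc)"
  shows "ubiconnected T (set cyc)"
  unfolding ubiconnected_def
proof (intro conjI ballI)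
  show "3 \<le> card (set cyc)" using d l by (simp add: distinct_card)
  show "uconnected T (set cyc)" using path_uconnected[OF s d] .
next
  fix v assume "v \<in> set cyc"
  then obtain xs ys where c: "cyc = xs @ v # ys" by (meson split_list)
  have d': "distinct (ys @ xs)" using d c by auto
  have st: "set (ys @ xs) = set cyc - {v}" using d c by auto
  have sx: "successively (adjR T) xs" and sy: "successively (adjR T) ys"
    using s c by (auto simp: successively_append_iff successively_Cons)
  have "successively (adjR T) (ys @ xs)"
  proof -
    have "ys = [] \<or> xs = [] \<or> adjR T (last ys) (hd xs)"
    proof (cases "ys = [] \<or> xs = []")
      case False
      then have "last ys = last cyc" "hd xs = hd cyc" using c by auto
      then show ?thesis using w by simp
    qed auto
    then show ?thesis using sx sy by (simp add: successively_append_iff)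
  qed
  from path_uconnected[OF this d'] st show "uconnected T (set cyc - {v})" by simp
qed


abbreviation walk :: "(nat \<Rightarrow> nat \<Rightarrow> real) \<Rightarrow> nat list \<Rightarrow> bool" where
  "walk T p \<equiv> successively (\<lambda>u v. T v u > 0) p"

lemma relpow_walk:
  assumes "(u,v) \<in> (arcs_minus N T K) ^^ i" "u \<in> verts N - K"
  shows "\<exists>p. p \<noteq> [] \<and> length p = Suc i \<and> hd p = u \<and> last p = v \<and> walk T p \<and> set p \<subseteq> verts N - K"
  using assms
proof (induction i arbitrary: u)
  case 0 then show ?case by (intro exI[of _ "[u]"]) auto
next
  case (Suc i)
  then obtain y where y: "(u,y) \<in> arcs_minus N T K" "(y,v) \<in> (arcs_minus N T K) ^^ i"
    by (meson relpow_Suc_D2)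
  then have yv: "y \<in> verts N - K" "T y u > 0" unfolding arcs_minus_def by auto
  obtain p where p: "p \<noteq> [] \<and> length p = Suc i \<and> hd p = y \<and> last p = v \<and> walk T p \<and> set p \<subseteq> verts N - K"
    using Suc.IH[OF y(2) yv(1)] by blast
  show ?case
    apply (intro exI[of _ "u # p"])
    using p yv Suc.prems by (auto simp: successively_Cons)
qed

lemma walk_reach:
  assumes "walk T p" "set p \<subseteq> W" "u \<in> set p"
  shows "(u, last p) \<in> (darcs T W)\<^sup>*"
  using assms
proof (induction p arbitrary: u)
  case Nil then show ?case by simp
next
  case (Cons x p)
  show ?case
  proof (cases p)
    case Nil then show ?thesis using Cons by simp
  next
    case (Cons y q)
    have e: "(x,y) \<in> darcs T W" using Cons.prems \<open>p = y#q\<close> unfolding darcs_def by auto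
    have IH: "\<And>u. u \<in> set p \<Longrightarrow> (u, last p) \<in> (darcs T W)\<^sup>*"
      using Cons.IH Cons.prems \<open>p = y#q\<close> by auto
    have "(y, last p) \<in> (darcs T W)\<^sup>*" using IH \<open>p = y#q\<close> by simp
    then have "(x, last p) \<in> (darcs T W)\<^sup>*" using e by (meson converse_rtrancl_into_rtrancl)
    then show ?thesis using Cons.prems IH \<open>p = y#q\<close> by auto
  qed
qed

lemma shortcut:
  assumes "walk T p" "\<not> distinct p"
  shows "\<exists>p'. p' \<noteq> [] \<and> walk T p' \<and> hd p' = hd p \<and> last p' = last p \<and> set p' \<subseteq> set p
           \<and> length p' < length p"
proof -
  obtain xs ys zs y where p: "p = xs @ [y] @ ys @ [y] @ zs" using not_distinct_decomp[OF assms(2)] by blast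
  have w1: "walk T ((xs @ [y]) @ (ys @ [y] @ zs))" using assms(1) unfolding p by simp
  have w2: "walk T ((xs @ [y] @ ys) @ ([y] @ zs))" using assms(1) unfolding p by simp
  have "walk T (xs @ [y])" "walk T ([y] @ zs)"
    using successively_append_iff[THEN iffD1, OF w1] successively_append_iff[THEN iffD1, OF w2] by auto
  then have "walk T ((xs @ [y]) @ zs)"
    by (cases zs) (auto simp: successively_append_iff)
  then show ?thesis
    apply (intro exI[of _ "xs @ [y] @ zs"])
    unfolding p by (cases xs; cases zs; auto)
qed


lemma walk_adj: "walk T p \<Longrightarrow> successively (adjR T) p"
  by (erule successively_mono) (auto simp: adjR_def)

lemma adjR_sym: "adjR T u v \<Longrightarrow> adjR T v u"
  by (auto simp: adjR_def)

lemma no_short_cycle: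
  assumes small: "\<forall>W. directed_subblock N T W \<longrightarrow> n0 \<le> card W"
    and kv: "k \<in> verts N" and nv: "n \<in> verts N" and mv: "m \<in> verts N"
    and dist: "k \<noteq> n" "k \<noteq> m" "n \<noteq> m"
    and Tkn: "T k n > 0" and km: "adjR T k m"
    and w1: "w \<in> IN_set N T {k} a {n}" and w2: "w \<in> IN_set N T {k} b {m}"
  shows "n0 \<le> a + b + 2"
proof -
  let ?R = "arcs_minus N T {k}"
  from w1 obtain i where i: "i \<le> a" "(w,n) \<in> ?R ^^ i" and wv: "w \<in> verts N - {k}"
    unfolding IN_set_def by auto
  from w2 obtain j where j: "j \<le> b" "(w,m) \<in> ?R ^^ j"
    unfolding IN_set_def by auto
  obtain q1 where q1: "q1 \<noteq> [] \<and> length q1 = Suc i \<and> hd q1 = w \<and> last q1 = n \<and> walk T q1 \<and> set q1 \<subseteq> verts N - {k}"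
    using relpow_walk[OF i(2) wv] by blast
  obtain q2 where q2: "q2 \<noteq> [] \<and> length q2 = Suc j \<and> hd q2 = w \<and> last q2 = m \<and> walk T q2 \<and> set q2 \<subseteq> verts N - {k}"
    using relpow_walk[OF j(2) wv] by blast
  define P where "P = (\<lambda>(p1::nat list, p2::nat list). p1 \<noteq> [] \<and> p2 \<noteq> [] \<and> hd p1 = hd p2 \<and> last p1 = n \<and> last p2 = m
     \<and> walk T p1 \<and> walk T p2 \<and> set p1 \<subseteq> verts N - {k} \<and> set p2 \<subseteq> verts N - {k})"
  define \<mu> where "\<mu> = (\<lambda>(p1::nat list, p2::nat list). length p1 + length p2)"
  have "P (q1,q2)" using q1 q2 unfolding P_def by auto
  from ex_has_least_nat[of P, OF this, of \<mu>] obtain pp where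
    pp: "P pp" "\<forall>y. P y \<longrightarrow> \<mu> pp \<le> \<mu> y" by blast
  obtain p1 p2 where pe: "pp = (p1,p2)" by (cases pp)
  have P12: "p1 \<noteq> []" "p2 \<noteq> []" "hd p1 = hd p2" "last p1 = n" "last p2 = m"
     "walk T p1" "walk T p2" "set p1 \<subseteq> verts N - {k}" "set p2 \<subseteq> verts N - {k}"
    using pp(1) unfolding pe P_def by auto
  have minl: "\<And>r1 r2. P (r1,r2) \<Longrightarrow> length p1 + length p2 \<le> length r1 + length r2"
    using pp(2) unfolding pe \<mu>_def by auto
  have len: "length p1 + length p2 \<le> a + b + 2"
    using minl[OF \<open>P (q1,q2)\<close>] q1 q2 i j by auto
  have d1: "distinct p1"
  proof (rule ccontr)
    assume "\<not> distinct p1"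
    from shortcut[OF P12(6) this] obtain p' where p': "p' \<noteq> [] \<and> walk T p' \<and> hd p' = hd p1 \<and> last p' = last p1 \<and> set p' \<subseteq> set p1
           \<and> length p' < length p1" by blast
    then have "P (p',p2)" using P12 unfolding P_def by auto
    from minl[OF this] p' show False by simp
  qed
  have d2: "distinct p2"
  proof (rule ccontr)
    assume "\<not> distinct p2"
    from shortcut[OF P12(7) this] obtain p' where p': "p' \<noteq> [] \<and> walk T p' \<and> hd p' = hd p2 \<and> last p' = last p2 \<and> set p' \<subseteq> set p2
           \<and> length p' < length p2" by blast
    then have "P (p1,p')" using P12 unfolding P_def by auto
    from minl[OF this] p' show False by simp
  qed
  have inter: "\<And>z. z \<in> set p1 \<Longrightarrow> z \<in> set p2 \<Longrightarrow> z = hd p1"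
  proof (rule ccontr)
    fix z assume z: "z \<in> set p1" "z \<in> set p2" "z \<noteq> hd p1"
    obtain xs ys where x: "p1 = xs @ z # ys" using z(1) by (meson split_list)
    obtain us vs where u: "p2 = us @ z # vs" using z(2) by (meson split_list)
    have "xs \<noteq> []" using x z(3) by auto
    have "walk T (z # ys)" using P12(6) unfolding x by (simp add: successively_append_iff)
    moreover have "walk T (z # vs)" using P12(7) unfolding u by (simp add: successively_append_iff)
    ultimately have "P (z#ys, z#vs)" using P12 x u unfolding P_def by auto
    from minl[OF this] x u \<open>xs \<noteq> []\<close> show False by simp
  qed
  obtain w' t1 where p1e: "p1 = w' # t1" using P12(1) by (cases p1) auto
  obtain t2 where p2e: "p2 = w' # t2" using P12(2,3) p1e by (cases p2) auto
  define cyc where "cyc = rev p1 @ t2 @ [k]"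
  have kn1: "k \<notin> set p1" "k \<notin> set p2" using P12(8,9) by auto
  have disj: "set p1 \<inter> set t2 = {}"
  proof (rule ccontr)
    assume "set p1 \<inter> set t2 \<noteq> {}"
    then obtain z where z1: "z \<in> set p1" and z2: "z \<in> set t2" by blast
    have "z \<in> set p2" using p2e z2 by simp
    then have "z = hd p1" using inter z1 by blast
    then have "z = w'" using p1e by simp
    then show False using d2 p2e z2 by simp
  qed
  have dc: "distinct cyc"
    unfolding cyc_def using d1 d2 p2e kn1 disj by simp
  have setc: "set cyc = insert k (set p1 \<union> set p2)" unfolding cyc_def using p1e p2e by (simp add: insert_commute)
  have nin: "n \<in> set p1" using P12(1,4) last_in_set by metis
  have min: "m \<in> set p2" using P12(2,5) last_in_set by metis
  have lc: "length cyc = length p1 + length p2" unfolding cyc_def using p2e by simp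
  have card3: "3 \<le> length cyc"
  proof -
    have "{k,n,m} \<subseteq> set cyc" using setc nin min by auto
    then have "card {k,n,m} \<le> card (set cyc)" by (intro card_mono) auto
    then show ?thesis using dist dc by (simp add: distinct_card)
  qed
  have sc: "successively (adjR T) cyc"
  proof -
    have a1: "successively (adjR T) (rev p1)" using walk_adj[OF P12(6)]
      by (simp add: successively_mono adjR_sym)
    have a2: "successively (adjR T) p2" using walk_adj[OF P12(7)] .
    have "successively (adjR T) (rev t1 @ [w'])" using a1 p1e by simp
    then have b: "successively (adjR T) (rev t1)" "t1 = [] \<or> adjR T (last (rev t1)) w'"
      by (auto simp: successively_append_iff)
    have eq: "rev p1 @ t2 = rev t1 @ p2" using p1e p2e by simp
    have s12: "successively (adjR T) (rev p1 @ t2)"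
      unfolding eq using b a2 p2e by (auto simp: successively_append_iff)
    have "last (rev p1 @ t2) = m"
    proof (cases "t2 = []")
      case True then show ?thesis using P12(5) p2e p1e by simp
    next
      case False then show ?thesis using P12(5) p2e by simp
    qed
    then have adj: "adjR T (last (rev p1 @ t2)) k" using adjR_sym[OF km] by simp
    have ce: "cyc = (rev p1 @ t2) @ [k]" by (simp add: cyc_def)
    show ?thesis unfolding ce successively_append_iff[of _ "rev p1 @ t2" "[k]"] using s12 adj by simp
  qed
  have wrap: "adjR T (last cyc) (hd cyc)"
  proof -
    have "hd cyc = hd (rev p1)" unfolding cyc_def using P12(1) by (simp add: hd_append2)
    then have "hd cyc = n" using P12(1,4) by (simp add: hd_rev)
    then show ?thesis unfolding cyc_def using Tkn by (simp add: adjR_def)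
  qed
  have sub: "set cyc \<subseteq> verts N" using setc P12 kv by auto
  let ?W = "set cyc"
  have r1: "\<And>u. u \<in> set p1 \<Longrightarrow> (u, n) \<in> (darcs T ?W)\<^sup>*"
    using walk_reach[OF P12(6), of ?W] setc P12(4) by auto
  have r2: "\<And>u. u \<in> set p2 \<Longrightarrow> (u, m) \<in> (darcs T ?W)\<^sup>*"
    using walk_reach[OF P12(7), of ?W] setc P12(5) by auto
  have nk: "(n,k) \<in> darcs T ?W" using Tkn setc nin unfolding darcs_def by auto
  have root: "\<exists>r\<in>?W. \<forall>u\<in>?W. (u, r) \<in> (darcs T ?W)\<^sup>*"
  proof (cases "T k m > 0")
    case True
    have mk: "(m,k) \<in> darcs T ?W" using True setc min unfolding darcs_def by auto
    show ?thesis
    proof (intro bexI[of _ k] ballI)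
      fix u assume "u \<in> ?W"
      then consider "u = k" | "u \<in> set p1" | "u \<in> set p2" using setc by auto
      then show "(u, k) \<in> (darcs T ?W)\<^sup>*"
        by cases (use r1 r2 nk mk in \<open>auto intro: rtrancl_into_rtrancl\<close>)
    qed (use setc in auto)
  next
    case False
    then have "T m k > 0" using km by (auto simp: adjR_def)
    then have km': "(k,m) \<in> darcs T ?W" using setc min unfolding darcs_def by auto
    show ?thesis
    proof (intro bexI[of _ m] ballI)
      fix u assume "u \<in> ?W"
      then consider "u = k" | "u \<in> set p1" | "u \<in> set p2" using setc by auto
      then show "(u, m) \<in> (darcs T ?W)\<^sup>*"
      proof cases
        case 1 then show ?thesis using km' by auto
      next
        case 2
        then have "(u,k) \<in> (darcs T ?W)\<^sup>*" using r1 nk by (meson rtrancl_into_rtrancl)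
        then show ?thesis using km' by (meson rtrancl_into_rtrancl)
      next
        case 3 then show ?thesis using r2 by auto
      qed
    qed (use min setc in auto)
  qed
  have "directed_subblock N T ?W"
    unfolding directed_subblock_def using sub root cycle_ubi[OF dc card3 sc wrap] by blast
  then have "n0 \<le> card ?W" using small by blast
  then show ?thesis using dc lc len by (simp add: distinct_card)
qed


lemma keyfC:
  assumes small: "\<forall>W. directed_subblock N T W \<longrightarrow> n0 \<le> card W" and xb: "x + 2 < n0"
    and kv: "k \<in> verts N" and nv: "n \<in> verts N" and mv: "m \<in> verts N"
    and dist: "k \<noteq> n" "k \<noteq> m" "n \<noteq> m"
    and Tkn: "T k n > 0" and km: "adjR T k m"
  shows "fC N T x {n} {m} {k} = 1"
proof -
  have "\<forall>a b. a + b = x \<longrightarrow> IN_set N T {k} a {n} \<inter> IN_set N T {k} b {m} = {}"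
  proof (intro allI impI)
    fix a b assume ab: "a + b = x"
    show "IN_set N T {k} a {n} \<inter> IN_set N T {k} b {m} = {}"
    proof (rule ccontr)
      assume "IN_set N T {k} a {n} \<inter> IN_set N T {k} b {m} \<noteq> {}"
      then obtain w where "w \<in> IN_set N T {k} a {n}" "w \<in> IN_set N T {k} b {m}" by blast
      from no_short_cycle[OF small kv nv mv dist Tkn km this] ab xb show False by simp
    qed
  qed
  then show ?thesis unfolding fC_def by simp
qed

definition good :: "nat \<Rightarrow> (nat \<Rightarrow> nat \<Rightarrow> real) \<Rightarrow> sstate \<Rightarrow> bool" where
  "good N T \<psi> \<longleftrightarrow> (\<exists>i\<in>verts N. dom \<psi> = {i}) \<or>
     (\<exists>u v. u \<noteq> v \<and> u \<in> verts N \<and> v \<in> verts N \<and> dom \<psi> = {u,v} \<and> adjR T u v)"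

lemma good_verts: "good N T \<psi> \<Longrightarrow> dom \<psi> \<subseteq> verts N"
  unfolding good_def by (elim disjE bexE exE conjE) simp_all

lemma good_card: "good N T \<psi> \<Longrightarrow> card (dom \<psi>) \<le> 2"
  unfolding good_def by auto

lemma fC_val:
  assumes small: "\<forall>W. directed_subblock N T W \<longrightarrow> n0 \<le> card W" and xb: "x + 2 < n0"
    and g: "good N T \<psi>" and k: "k \<in> dom \<psi>" and n: "n \<in> verts N - dom \<psi>" and Tkn: "T k n > 0"
  shows "fC N T x {n} (dom \<psi> - {k}) {k} = (if dom \<psi> = {k} then 0 else 1)"
  using g unfolding good_def
proof (elim disjE bexE exE conjE)
  fix i assume "i \<in> verts N" "dom \<psi> = {i}"
  then show ?thesis using k unfolding fC_def by auto
next
  fix u v assume uv: "u \<noteq> v" "u \<in> verts N" "v \<in> verts N" "dom \<psi> = {u, v}" "adjR T u v"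
  show ?thesis
  proof (cases "k = u")
    case True
    then have "dom \<psi> - {k} = {v}" "dom \<psi> \<noteq> {k}" using uv by auto
    then show ?thesis using keyfC[OF small xb, of k n v] uv True n Tkn by auto
  next
    case False
    then have kv: "k = v" using k uv by auto
    then have "dom \<psi> - {k} = {u}" "dom \<psi> \<noteq> {k}" using uv by auto
    then show ?thesis using keyfC[OF small xb, of k n u] uv kv n Tkn adjR_sym[OF uv(5)] by auto
  qed
qed

lemma Mset_good:
  assumes small: "\<forall>W. directed_subblock N T W \<longrightarrow> n0 \<le> card W" and xb: "x + 2 < n0"
    and "\<psi> \<in> Mset N T x"
  shows "good N T \<psi>"
  using assms(3)
proof (induction rule: Mset.induct)
  case (single_S i) then show ?case unfolding good_def by auto
next
  case (single_I i) then show ?case unfolding good_def by auto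
next
  case (ind_inner \<psi> k n)
  have "dom (\<psi>(k \<mapsto> Sus)) = dom \<psi>" using ind_inner.hyps(3) by auto
  then show ?case using ind_inner.IH unfolding good_def by simp
next
  case (ind_open \<psi> k n)
  have "dom \<psi> = {k}"
    using fC_val[OF small xb ind_open.IH ind_open.hyps(3,4,5)] ind_open.hyps(6)
    by (auto split: if_splits)
  then have kv: "k \<in> verts N" using good_verts[OF ind_open.IH] by auto
  have "dom (\<psi>(k \<mapsto> Sus, n \<mapsto> Inf)) = {k, n}" using \<open>dom \<psi> = {k}\<close> by auto
  then show ?case unfolding good_def using kv ind_open.hyps(4,5) \<open>dom \<psi> = {k}\<close>
    by (intro disjI2 exI[of _ k] exI[of _ n]) (auto simp: adjR_def)
next
  case (ind_closed1 \<psi> k n)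
  have "dom (\<psi>(k \<mapsto> Sus)) = dom \<psi>" using ind_closed1.hyps(3) by auto
  then show ?case using ind_closed1.IH unfolding good_def by simp
next
  case (ind_closed2 \<psi> k n)
  have kv: "k \<in> verts N" using good_verts[OF ind_closed2.IH] ind_closed2.hyps(3) by auto
  have "dom [k \<mapsto> Sus, n \<mapsto> Inf] = {k, n}" by auto
  then show ?case unfolding good_def using kv ind_closed2.hyps(3,4,5)
    by (intro disjI2 exI[of _ k] exI[of _ n]) (auto simp: adjR_def)
next
  case (ind_closed3 \<psi> k n)
  have kv: "k \<in> verts N" using good_verts[OF ind_closed3.IH] ind_closed3.hyps(3) by auto
  then show ?case unfolding good_def by auto
qed

lemma Mset_sub:
  assumes small: "\<forall>W. directed_subblock N T W \<longrightarrow> n0 \<le> card W" and xb: "x + 2 < n0"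
    and yb: "y + 2 < n0" and "\<psi> \<in> Mset N T x"
  shows "\<psi> \<in> Mset N T y"
  using assms(4)
proof (induction rule: Mset.induct)
  case (single_S i) then show ?case by (rule Mset.single_S)
next
  case (single_I i) then show ?case by (rule Mset.single_I)
next
  case (ind_inner \<psi> k n) then show ?case by (intro Mset.ind_inner) auto
next
  case (ind_open \<psi> k n)
  have g: "good N T \<psi>" using Mset_good[OF small xb ind_open.hyps(1)] .
  have "fC N T y {n} (dom \<psi> - {k}) {k} = fC N T x {n} (dom \<psi> - {k}) {k}"
    using fC_val[OF small xb g ind_open.hyps(3,4,5)] fC_val[OF small yb g ind_open.hyps(3,4,5)] by simp
  then show ?case using ind_open by (intro Mset.ind_open) auto
next
  case (ind_closed1 \<psi> k n)
  have g: "good N T \<psi>" using Mset_good[OF small xb ind_closed1.hyps(1)] .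
  have "fC N T y {n} (dom \<psi> - {k}) {k} = fC N T x {n} (dom \<psi> - {k}) {k}"
    using fC_val[OF small xb g ind_closed1.hyps(3,4,5)] fC_val[OF small yb g ind_closed1.hyps(3,4,5)] by simp
  then show ?case using ind_closed1 by (intro Mset.ind_closed1) auto
next
  case (ind_closed2 \<psi> k n)
  have g: "good N T \<psi>" using Mset_good[OF small xb ind_closed2.hyps(1)] .
  have "fC N T y {n} (dom \<psi> - {k}) {k} = fC N T x {n} (dom \<psi> - {k}) {k}"
    using fC_val[OF small xb g ind_closed2.hyps(3,4,5)] fC_val[OF small yb g ind_closed2.hyps(3,4,5)] by simp
  then show ?case using ind_closed2 by (intro Mset.ind_closed2) auto
next
  case (ind_closed3 \<psi> k n)
  have g: "good N T \<psi>" using Mset_good[OF small xb ind_closed3.hyps(1)] .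
  have "fC N T y {n} (dom \<psi> - {k}) {k} = fC N T x {n} (dom \<psi> - {k}) {k}"
    using fC_val[OF small xb g ind_closed3.hyps(3,4,5)] fC_val[OF small yb g ind_closed3.hyps(3,4,5)] by simp
  then show ?case using ind_closed3 by (intro Mset.ind_closed3) auto
qed

lemma rhs_eq:
  assumes small: "\<forall>W. directed_subblock N T W \<longrightarrow> n0 \<le> card W" and xb: "x + 2 < n0"
    and yb: "y + 2 < n0" and g: "good N T \<psi>" and nn: "\<forall>i j. T i j \<ge> 0"
  shows "closed_rhs N T \<gamma> x \<psi> = closed_rhs N T \<gamma> y \<psi>"
proof
  fix Y
  have S: "\<And>k. k \<in> dom \<psi> \<Longrightarrow> (\<Sum>n\<in>verts N - dom \<psi>. T k n * closed_term N T x \<psi> Y k n)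
      = (\<Sum>n\<in>verts N - dom \<psi>. T k n * closed_term N T y \<psi> Y k n)"
  proof (rule sum.cong[OF refl])
    fix k n assume k: "k \<in> dom \<psi>" and n: "n \<in> verts N - dom \<psi>"
    show "T k n * closed_term N T x \<psi> Y k n = T k n * closed_term N T y \<psi> Y k n"
    proof (cases "T k n > 0")
      case True
      have "fC N T y {n} (dom \<psi> - {k}) {k} = fC N T x {n} (dom \<psi> - {k}) {k}"
        using fC_val[OF small xb g k n True] fC_val[OF small yb g k n True] by simp
      then show ?thesis unfolding closed_term_def by simp
    next
      case False
      then have "T k n = 0" using nn[rule_format, of k n] by linarith
      then show ?thesis by simp
    qed
  qed
  show "closed_rhs N T \<gamma> x \<psi> Y = closed_rhs N T \<gamma> y \<psi> Y"
    unfolding closed_rhs_def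
    by (rule sum.cong[OF refl]) (use S in \<open>auto split: option.split status.split\<close>)
qed

theorem mainTheorem13:
  fixes N n x :: nat and T :: "nat \<Rightarrow> nat \<Rightarrow> real" and \<gamma> :: "nat \<Rightarrow> real"
  assumes T_nonneg: "\<forall>i j. T i j \<ge> 0"
    and T_diag: "\<forall>i. T i i = 0"
    and T_supp: "\<forall>i j. T i j > 0 \<longrightarrow> i \<in> verts N \<and> j \<in> verts N"
    and smallest: "(\<exists>W. directed_subblock N T W \<and> card W = n)"
      "\<forall>W. directed_subblock N T W \<longrightarrow> n \<le> card W"
    and x_bound: "x + 2 < n"
  shows "(\<forall>\<psi>\<in>Mset N T x. card (dom \<psi>) \<le> 2)
       \<and> Mset N T x = Mset N T 0
       \<and> closed_model N T \<gamma> x = closed_model N T \<gamma> 0"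
proof (intro conjI)
  have zb: "0 + 2 < n" using x_bound by simp
  show "\<forall>\<psi>\<in>Mset N T x. card (dom \<psi>) \<le> 2"
    using Mset_good[OF smallest(2) x_bound] good_card by blast
  show eq: "Mset N T x = Mset N T 0"
    using Mset_sub[OF smallest(2) x_bound zb] Mset_sub[OF smallest(2) zb x_bound] by blast
  show "closed_model N T \<gamma> x = closed_model N T \<gamma> 0"
  proof
    fix \<psi>
    show "closed_model N T \<gamma> x \<psi> = closed_model N T \<gamma> 0 \<psi>"
    proof (cases "\<psi> \<in> Mset N T x")
      case True
      have g: "good N T \<psi>" using Mset_good[OF smallest(2) x_bound True] .
      show ?thesis unfolding closed_model_def using True eq
          rhs_eq[OF smallest(2) x_bound zb g T_nonneg] by simp
    next
      case False
      then show ?thesis unfolding closed_model_def using eq by simp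
    qed
  qed
qed

end
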